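(* Let $x\in\mathbb{R}_{\mathrm{alg}}^\times$ and $p\in\mathcal{P}_{KZ}$ with $p\notin\mathbb{R}_{\mathrm{alg}}$. Then $\deg(x+p)=\deg(p)$.
   Context: $\mathbb{R}_{\mathrm{alg}}=\mathbb{R}\cap\overline{\mathbb{Q}}$. Semialgebraic subsets of $\mathbb{R}^n$ are finite unions of finite intersections of sets $\{f=0\}$, $\{g>0\}$ with $f,g\in\mathbb{R}_{\mathrm{alg}}[T_1,\dots,T_n]$; $\mathcal{SA}^n$ denotes those with nonempty interior. A period is a real number $\int_X (P/Q)(x)\,dx$ (absolutely convergent) with $X\in\mathcal{SA}^n$, $P,Q\in\mathbb{R}_{\mathrm{alg}}[T_1,\dots,T_n]$, $Q$ not identically zero on $X$; $\mathcal{P}_{KZ}$ is the set of periods (it is an $\mathbb{R}_{\mathrm{alg}}$-algebra). For a nonzero period $p$ there exists a positive integer $k$ and a compact $K\in\mathcal{SA}^k$ with $|p|=\mathrm{vol}_k(K)$; $\deg(p)$ is the smallest such $k$, and $\deg(0)=0$. *)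

theory Defs
  imports "HOL-Analysis.Analysis" "HOL-Computational_Algebra.Polynomial"
begin

text \<open>Points of R^n are represented as extensional functions on {..<n};
  R^n carries the n-fold product of Lebesgue-Borel measure.\<close>

definition Rn :: "nat \<Rightarrow> (nat \<Rightarrow> real) set" where
  "Rn n = PiE {..<n} (\<lambda>_. UNIV)"

definition lebn :: "nat \<Rightarrow> (nat \<Rightarrow> real) measure" where
  "lebn n = PiM {..<n} (\<lambda>_. lborel)"

definition ralg :: "real \<Rightarrow> bool" where
  "ralg x \<longleftrightarrow> algebraic x"

inductive_set alg_poly :: "nat \<Rightarrow> ((nat \<Rightarrow> real) \<Rightarrow> real) set" for n :: nat where
  const: "ralg c \<Longrightarrow> (\<lambda>x. c) \<in> alg_poly n"
| var: "i < n \<Longrightarrow> (\<lambda>x. x i) \<in> alg_poly n"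
| add: "f \<in> alg_poly n \<Longrightarrow> g \<in> alg_poly n \<Longrightarrow> (\<lambda>x. f x + g x) \<in> alg_poly n"
| mult: "f \<in> alg_poly n \<Longrightarrow> g \<in> alg_poly n \<Longrightarrow> (\<lambda>x. f x * g x) \<in> alg_poly n"

text \<open>Semialgebraic subsets of R^n: generated from {f = 0}, {g > 0} by finite
  (binary) unions and intersections; this gives exactly the finite unions of
  finite intersections of such sets.\<close>
inductive_set semialg :: "nat \<Rightarrow> (nat \<Rightarrow> real) set set" for n :: nat where
  zero: "f \<in> alg_poly n \<Longrightarrow> {x \<in> Rn n. f x = 0} \<in> semialg n"
| pos: "g \<in> alg_poly n \<Longrightarrow> {x \<in> Rn n. g x > 0} \<in> semialg n"
| inter: "A \<in> semialg n \<Longrightarrow> B \<in> semialg n \<Longrightarrow> A \<inter> B \<in> semialg n"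
| union: "A \<in> semialg n \<Longrightarrow> B \<in> semialg n \<Longrightarrow> A \<union> B \<in> semialg n"

text \<open>Nonempty interior in R^n (Euclidean topology, via coordinate boxes).\<close>
definition nonempty_interior :: "nat \<Rightarrow> (nat \<Rightarrow> real) set \<Rightarrow> bool" where
  "nonempty_interior n X \<longleftrightarrow>
     (\<exists>x\<in>X. \<exists>e>0. \<forall>y\<in>Rn n. (\<forall>i<n. \<bar>y i - x i\<bar> < e) \<longrightarrow> y \<in> X)"

definition SA :: "nat \<Rightarrow> (nat \<Rightarrow> real) set set" where
  "SA n = {X \<in> semialg n. nonempty_interior n X}"

text \<open>Kontsevich--Zagier periods: absolutely convergent (= Lebesgue integrable)
  integrals of P/Q over X in SA^n, with Q vanishing only on a null subset of X.\<close>
definition periods :: "real set" where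
  "periods = {p. \<exists>n>0. \<exists>X P Q. X \<in> SA n \<and> P \<in> alg_poly n \<and> Q \<in> alg_poly n \<and>
      (AE x in lebn n. x \<in> X \<longrightarrow> Q x \<noteq> 0) \<and>
      set_integrable (lebn n) X (\<lambda>x. P x / Q x) \<and>
      p = (LINT x:X|lebn n. P x / Q x)}"

definition period_deg :: "real \<Rightarrow> nat" where
  "period_deg p = (if p = 0 then 0 else
     (LEAST k. k > 0 \<and> (\<exists>K. K \<in> SA k \<and> compact K \<and> \<bar>p\<bar> = measure (lebn k) K)))"

end

theory Submission
  imports Defs
begin


lemma ralg_rat: "q \<in> \<rat> \<Longrightarrow> ralg q"
  by (simp add: ralg_def rat_imp_algebraic)

lemma ralg_uminus: "ralg x \<Longrightarrow> ralg (-x)"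
  by (simp add: ralg_def)

lemma ralg_add_rat:
  assumes "ralg x" "q \<in> \<rat>" shows "ralg (x + q)"
proof -
  from assms(1) obtain p where p: "\<forall>i. coeff p i \<in> \<rat>" "p \<noteq> 0" "poly p x = 0"
    unfolding ralg_def algebraic_altdef by blast
  define r where "r = pcompose p [:-q, 1:]"
  have "poly r (x + q) = 0" using p by (simp add: r_def poly_pcompose)
  moreover have "r \<noteq> 0" using p by (auto simp: r_def pcompose_eq_0_iff)
  moreover have "coeff r i \<in> \<rat>" for i
    unfolding r_def using p assms(2)
    by (intro coeff_pcompose_semiring_closed) (auto simp: coeff_pCons split: nat.splits)
  ultimately show ?thesis unfolding ralg_def by (intro algebraicI') auto
qed

lemma ralg_mult_rat:
  assumes "ralg x" "q \<in> \<rat>" "q \<noteq> 0" shows "ralg (q * x)"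
proof -
  from assms(1) obtain p where p: "\<forall>i. coeff p i \<in> \<rat>" "p \<noteq> 0" "poly p x = 0"
    unfolding ralg_def algebraic_altdef by blast
  define r where "r = pcompose p [:0, inverse q:]"
  have "poly r (q * x) = poly p (q * x * inverse q)" by (simp add: r_def poly_pcompose)
  also have "q * x * inverse q = x" using assms(3) by simp
  finally have "poly r (q * x) = 0" using p by simp
  moreover have "r \<noteq> 0" using p assms(3) by (auto simp: r_def pcompose_eq_0_iff)
  moreover have "coeff r i \<in> \<rat>" for i
    unfolding r_def using p assms(2)
    by (intro coeff_pcompose_semiring_closed) (auto simp: coeff_pCons split: nat.splits)
  ultimately show ?thesis unfolding ralg_def by (intro algebraicI') auto
qed

lemma ap_const_rat: "q \<in> \<rat> \<Longrightarrow> (\<lambda>x. q) \<in> alg_poly n"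
  by (rule alg_poly.const) (rule ralg_rat)

lemma ap_neg: "f \<in> alg_poly n \<Longrightarrow> (\<lambda>x. - f x) \<in> alg_poly n"
proof -
  assume f: "f \<in> alg_poly n"
  have "(\<lambda>x. (-1) * f x) \<in> alg_poly n"
    by (rule alg_poly.mult[OF ap_const_rat f]) simp
  thus ?thesis by simp
qed

lemma ap_diff: "f \<in> alg_poly n \<Longrightarrow> g \<in> alg_poly n \<Longrightarrow> (\<lambda>x. f x - g x) \<in> alg_poly n"
  using alg_poly.add[OF _ ap_neg] by simp

lemma ap_sum_list: "(\<And>a. a \<in> set L \<Longrightarrow> a \<in> alg_poly n) \<Longrightarrow> (\<lambda>x. \<Sum>a\<leftarrow>L. a x) \<in> alg_poly n"
proof (induction L)
  case Nil then show ?case using ap_const_rat[of 0] by simp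
next
  case (Cons a L) then show ?case by (simp add: alg_poly.add)
qed

lemma ap_local: "f \<in> alg_poly n \<Longrightarrow> (\<And>i. i < n \<Longrightarrow> x i = y i) \<Longrightarrow> f x = f y"
  by (induction f rule: alg_poly.induct) auto

lemma space_lebn[simp]: "space (lebn n) = Rn n"
  by (simp add: lebn_def Rn_def space_PiM)

lemma sets_lebn_cong[measurable_cong]: "sets (lebn n) = sets (PiM {..<n} (\<lambda>_. lborel))"
  by (simp add: lebn_def)

lemma ap_meas: "f \<in> alg_poly n \<Longrightarrow> f \<in> borel_measurable (lebn n)"
  unfolding lebn_def
  by (induction f rule: alg_poly.induct) auto

lemma ap_cont: "f \<in> alg_poly n \<Longrightarrow> continuous_on UNIV f"
  by (induction f rule: alg_poly.induct) (auto intro!: continuous_intros)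

definition boxF :: "nat \<Rightarrow> (nat \<Rightarrow> real) \<Rightarrow> (nat \<Rightarrow> real) filter" where
  "boxF n x = (INF d\<in>{0::real<..}. principal {y. \<forall>i<n. \<bar>y i - x i\<bar> < d})"

lemma eventually_boxF: "eventually P (boxF n x) \<longleftrightarrow> (\<exists>d>0. \<forall>y. (\<forall>i<n. \<bar>y i - x i\<bar> < d) \<longrightarrow> P y)"
proof -
  have "eventually P (boxF n x) \<longleftrightarrow> (\<exists>d\<in>{0::real<..}. eventually P (principal {y. \<forall>i<n. \<bar>y i - x i\<bar> < d}))"
    unfolding boxF_def
  proof (rule eventually_INF_base)
    show "{0::real<..} \<noteq> {}" by (auto intro: exI[of _ 1])
    fix a b :: real assume "a \<in> {0<..}" "b \<in> {0<..}"
    then show "\<exists>d\<in>{0<..}. principal {y. \<forall>i<n. \<bar>y i - x i\<bar> < d} \<le> inf (principal {y. \<forall>i<n. \<bar>y i - x i\<bar> < a}) (principal {y. \<forall>i<n. \<bar>y i - x i\<bar> < b})"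
      by (intro bexI[of _ "min a b"]) auto
  qed
  then show ?thesis by (auto simp: eventually_principal)
qed

lemma ap_tendsto: "f \<in> alg_poly n \<Longrightarrow> (f \<longlongrightarrow> f x) (boxF n x)"
proof (induction f rule: alg_poly.induct)
  case (var i)
  show ?case
  proof (rule tendstoI)
    fix e :: real assume "e > 0"
    then show "eventually (\<lambda>y. dist (y i) (x i) < e) (boxF n x)"
      using var by (auto simp: eventually_boxF dist_real_def intro!: exI[of _ e])
  qed
qed (auto intro!: tendsto_intros)

lemma ap_eps:
  assumes "f \<in> alg_poly n" "e > 0"
  shows "\<exists>d>0. \<forall>y. (\<forall>i<n. \<bar>y i - x i\<bar> < d) \<longrightarrow> \<bar>f y - f x\<bar> < e"
proof -
  have "eventually (\<lambda>y. dist (f y) (f x) < e) (boxF n x)"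
    using tendstoD[OF ap_tendsto[OF assms(1)] assms(2)] .
  then show ?thesis by (simp add: eventually_boxF dist_real_def)
qed



lemma semialg_sub: "A \<in> semialg n \<Longrightarrow> A \<subseteq> Rn n"
  by (induction A rule: semialg.induct) auto

lemma semialg_sets: "A \<in> semialg n \<Longrightarrow> A \<in> sets (lebn n)"
proof (induction A rule: semialg.induct)
  case (zero f)
  have [measurable]: "f \<in> borel_measurable (lebn n)" using ap_meas[OF zero] .
  have "{x \<in> space (lebn n). f x = 0} \<in> sets (lebn n)" by measurable
  then show ?case by simp
next
  case (pos g)
  have [measurable]: "g \<in> borel_measurable (lebn n)" using ap_meas[OF pos] .
  have "{x \<in> space (lebn n). g x > 0} \<in> sets (lebn n)" by measurable
  then show ?case by simp
qed auto

lemma Rn_semialg: "Rn n \<in> semialg n"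
  using semialg.zero[OF ap_const_rat[of 0]] by simp

lemma empty_semialg: "{} \<in> semialg n"
  using semialg.zero[OF ap_const_rat[of 1]] by simp

lemma semialg_ge: "f \<in> alg_poly n \<Longrightarrow> {x \<in> Rn n. f x \<ge> 0} \<in> semialg n"
proof -
  assume f: "f \<in> alg_poly n"
  have "{x \<in> Rn n. f x \<ge> 0} = {x \<in> Rn n. f x = 0} \<union> {x \<in> Rn n. f x > 0}" by auto
  then show ?thesis using semialg.union[OF semialg.zero[OF f] semialg.pos[OF f]] by simp
qed

lemma semialg_compl: "A \<in> semialg n \<Longrightarrow> Rn n - A \<in> semialg n"
proof (induction A rule: semialg.induct)
  case (zero f)
  have "Rn n - {x \<in> Rn n. f x = 0} = {x \<in> Rn n. f x > 0} \<union> {x \<in> Rn n. - f x > 0}" by auto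
  then show ?case using semialg.union[OF semialg.pos[OF zero] semialg.pos[OF ap_neg[OF zero]]] by simp
next
  case (pos g)
  have "Rn n - {x \<in> Rn n. g x > 0} = {x \<in> Rn n. g x = 0} \<union> {x \<in> Rn n. - g x > 0}" by auto
  then show ?case using semialg.union[OF semialg.zero[OF pos] semialg.pos[OF ap_neg[OF pos]]] by simp
next
  case (inter A B)
  have "Rn n - (A \<inter> B) = (Rn n - A) \<union> (Rn n - B)" by auto
  then show ?case using semialg.union[OF inter.IH] by simp
next
  case (union A B)
  have "Rn n - (A \<union> B) = (Rn n - A) \<inter> (Rn n - B)" by auto
  then show ?case using semialg.inter[OF union.IH] by simp
qed

lemma semialg_diff: "A \<in> semialg n \<Longrightarrow> B \<in> semialg n \<Longrightarrow> A - B \<in> semialg n"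
proof -
  assume A: "A \<in> semialg n" and B: "B \<in> semialg n"
  have "A - B = A \<inter> (Rn n - B)" using semialg_sub[OF A] by auto
  then show ?thesis using semialg.inter[OF A semialg_compl[OF B]] by simp
qed

lemma semialg_all:
  fixes m :: nat
  shows "(\<And>i. i < m \<Longrightarrow> {x \<in> Rn n. P i x} \<in> semialg n) \<Longrightarrow> {x \<in> Rn n. \<forall>i<m. P i x} \<in> semialg n"
proof (induction m)
  case 0 then show ?case using Rn_semialg by simp
next
  case (Suc m)
  have eq: "{x \<in> Rn n. \<forall>i<Suc m. P i x} = {x \<in> Rn n. \<forall>i<m. P i x} \<inter> {x \<in> Rn n. P m x}"
    by (auto simp: less_Suc_eq)
  have IH: "{x \<in> Rn n. \<forall>i<m. P i x} \<in> semialg n" using Suc.IH Suc.prems by simp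
  have Pm: "{x \<in> Rn n. P m x} \<in> semialg n" using Suc.prems by simp
  show ?case unfolding eq by (rule semialg.inter[OF IH Pm])
qed

definition cbx :: "nat \<Rightarrow> (nat \<Rightarrow> real) \<Rightarrow> (nat \<Rightarrow> real) \<Rightarrow> (nat \<Rightarrow> real) set" where
  "cbx n a b = {x \<in> Rn n. \<forall>i<n. a i \<le> x i \<and> x i \<le> b i}"

definition obx :: "nat \<Rightarrow> (nat \<Rightarrow> real) \<Rightarrow> (nat \<Rightarrow> real) \<Rightarrow> (nat \<Rightarrow> real) set" where
  "obx n a b = {x \<in> Rn n. \<forall>i<n. a i < x i \<and> x i < b i}"

lemma cbx_PiE: "cbx n a b = PiE {..<n} (\<lambda>i. {a i..b i})"
  unfolding cbx_def Rn_def by (rule set_eqI) (simp add: PiE_iff, blast)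

lemma obx_PiE: "obx n a b = PiE {..<n} (\<lambda>i. {a i<..<b i})"
  unfolding obx_def Rn_def by (rule set_eqI) (simp add: PiE_iff, blast)

lemma ap_var_minus: "i < n \<Longrightarrow> ralg c \<Longrightarrow> (\<lambda>x. x i - c) \<in> alg_poly n"
  by (rule ap_diff[OF alg_poly.var alg_poly.const])

lemma ap_minus_var: "i < n \<Longrightarrow> ralg c \<Longrightarrow> (\<lambda>x. c - x i) \<in> alg_poly n"
  by (rule ap_diff[OF alg_poly.const alg_poly.var])

lemma cbx_semialg:
  assumes "\<And>i. i < n \<Longrightarrow> ralg (a i)" "\<And>i. i < n \<Longrightarrow> ralg (b i)"
  shows "cbx n a b \<in> semialg n"
  unfolding cbx_def
proof (rule semialg_all)
  fix i assume i: "i < n"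
  have eq: "{x \<in> Rn n. a i \<le> x i \<and> x i \<le> b i} = {x \<in> Rn n. x i - a i \<ge> 0} \<inter> {x \<in> Rn n. b i - x i \<ge> 0}"
    by auto
  show "{x \<in> Rn n. a i \<le> x i \<and> x i \<le> b i} \<in> semialg n"
    unfolding eq
    by (rule semialg.inter[OF semialg_ge[OF ap_var_minus[OF i assms(1)[OF i]]] semialg_ge[OF ap_minus_var[OF i assms(2)[OF i]]]])
qed

lemma obx_semialg:
  assumes "\<And>i. i < n \<Longrightarrow> ralg (a i)" "\<And>i. i < n \<Longrightarrow> ralg (b i)"
  shows "obx n a b \<in> semialg n"
  unfolding obx_def
proof (rule semialg_all)
  fix i assume i: "i < n"
  have eq: "{x \<in> Rn n. a i < x i \<and> x i < b i} = {x \<in> Rn n. x i - a i > 0} \<inter> {x \<in> Rn n. b i - x i > 0}"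
    by auto
  show "{x \<in> Rn n. a i < x i \<and> x i < b i} \<in> semialg n"
    unfolding eq
    by (rule semialg.inter[OF semialg.pos[OF ap_var_minus[OF i assms(1)[OF i]]] semialg.pos[OF ap_minus_var[OF i assms(2)[OF i]]]])
qed

interpretation lbs: product_sigma_finite "\<lambda>_::nat. lborel"
  by standard

lemma emeasure_cbx:
  assumes "\<And>i. i < n \<Longrightarrow> a i \<le> b i"
  shows "emeasure (lebn n) (cbx n a b) = ennreal (\<Prod>i<n. b i - a i)"
  unfolding cbx_PiE lebn_def
  by (subst lbs.emeasure_PiM) (auto simp: assms intro!: prod_ennreal)

lemma emeasure_obx:
  assumes "\<And>i. i < n \<Longrightarrow> a i \<le> b i"
  shows "emeasure (lebn n) (obx n a b) = ennreal (\<Prod>i<n. b i - a i)"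
  unfolding obx_PiE lebn_def
  by (subst lbs.emeasure_PiM) (auto simp: assms intro!: prod_ennreal)

lemma closed_Rn: "closed (Rn n)"
proof -
  have "Rn n = {x. \<forall>i. \<not> i < n \<longrightarrow> x i = undefined}"
    unfolding Rn_def by (rule set_eqI) (simp add: PiE_iff extensional_def)
  also have "closed \<dots>"
  proof (intro closed_Collect_all)
    fix i
    show "closed {x::nat\<Rightarrow>real. \<not> i < n \<longrightarrow> x i = undefined}"
    proof (cases "i < n")
      case False
      then show ?thesis
        using closed_Collect_eq[OF continuous_on_product_coordinates[of i] continuous_on_const[of UNIV "undefined::real"]]
        by simp
    qed simp
  qed
  finally show ?thesis .
qed

lemma closed_zero: "f \<in> alg_poly n \<Longrightarrow> closed {x \<in> Rn n. f x = 0}"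
proof -
  assume f: "f \<in> alg_poly n"
  have eq: "{x \<in> Rn n. f x = 0} = Rn n \<inter> {x. f x = (\<lambda>_. 0) x}" by blast
  have "closed {x. f x = (\<lambda>_. 0::real) x}"
    by (rule closed_Collect_eq[of f "\<lambda>_. 0"]) (rule ap_cont[OF f], rule continuous_on_const)
  then have "closed (Rn n \<inter> {x. f x = (\<lambda>_. 0) x})"
    by (rule closed_Int[OF closed_Rn])
  then show ?thesis unfolding eq .
qed

lemma closed_ge: "f \<in> alg_poly n \<Longrightarrow> closed {x \<in> Rn n. f x \<ge> 0}"
proof -
  assume f: "f \<in> alg_poly n"
  have eq: "{x \<in> Rn n. f x \<ge> 0} = Rn n \<inter> {x. (\<lambda>_. 0) x \<le> f x}" by blast
  have "closed {x. (\<lambda>_. 0::real) x \<le> f x}"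
    by (rule closed_Collect_le[of "\<lambda>_. 0" f]) (rule continuous_on_const, rule ap_cont[OF f])
  then have "closed (Rn n \<inter> {x. (\<lambda>_. 0) x \<le> f x})"
    by (rule closed_Int[OF closed_Rn])
  then show ?thesis unfolding eq .
qed

lemma compact_cbx: "compact (cbx n a b)"
proof -
  have e: "PiE {..<n} (\<lambda>i. {a i..b i}) = PiE UNIV (\<lambda>i. if i < n then {a i..b i} else {undefined})"
    by (auto simp: PiE_iff extensional_def split: if_splits)
  have "compactin (product_topology (\<lambda>_. euclidean) UNIV) (PiE UNIV (\<lambda>i. if i < n then {a i..b i} else {undefined::real}))"
    unfolding compactin_PiE by (auto simp: compactin_euclidean_iff)
  then have "compactin euclidean (PiE UNIV (\<lambda>i. if i < n then {a i..b i} else {undefined::real}))"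
    by (simp only: euclidean_product_topology)
  then show ?thesis unfolding cbx_PiE e compactin_euclidean_iff .
qed

lemma open_obx_core: "open {x::nat\<Rightarrow>real. \<forall>i<n. a i < x i \<and> x i < b i}"
proof -
  have "{x::nat\<Rightarrow>real. \<forall>i<n. a i < x i \<and> x i < b i} = (\<Inter>i\<in>{..<n}. {x. a i < x i} \<inter> {x. x i < b i})"
    by auto
  also have "open \<dots>"
    by (intro open_INT finite_lessThan ballI open_Int
        open_Collect_less[OF continuous_on_const continuous_on_product_coordinates]
        open_Collect_less[OF continuous_on_product_coordinates continuous_on_const])
  finally show ?thesis .
qed



lemma sum_list_prod_concat:
  "(\<Sum>p\<leftarrow>L1. f p) * (\<Sum>q\<leftarrow>L2. g q) = (\<Sum>r\<leftarrow>concat (map (\<lambda>p. map (\<lambda>q. (p, q)) L2) L1). f (fst r) * g (snd r))"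
  for f g :: "_ \<Rightarrow> real"
  by (induction L1) (auto simp: algebra_simps sum_list_const_mult o_def)

lemma ap_decomp:
  assumes "f \<in> alg_poly (Suc n)"
  shows "\<exists>L. (\<forall>p\<in>set L. fst p \<in> alg_poly n) \<and> (\<forall>x. f x = (\<Sum>p\<leftarrow>L. fst p x * x n ^ snd p))"
  using assms
proof (induction f rule: alg_poly.induct)
  case (const c)
  show ?case
    by (rule exI[of _ "[(\<lambda>x. c, 0)]"]) (auto intro: alg_poly.const const)
next
  case (var i)
  show ?case
  proof (cases "i < n")
    case True
    then show ?thesis
      by (intro exI[of _ "[(\<lambda>x. x i, 0)]"]) (auto intro: alg_poly.var)
  next
    case False
    then have "i = n" using var by simp
    then show ?thesis
      by (intro exI[of _ "[(\<lambda>x. 1, 1)]"]) (auto intro: ap_const_rat)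
  qed
next
  case (add f g)
  then obtain L1 L2 where
    L1: "\<forall>p\<in>set L1. fst p \<in> alg_poly n" "\<forall>x. f x = (\<Sum>p\<leftarrow>L1. fst p x * x n ^ snd p)" and
    L2: "\<forall>p\<in>set L2. fst p \<in> alg_poly n" "\<forall>x. g x = (\<Sum>p\<leftarrow>L2. fst p x * x n ^ snd p)"
    by blast
  show ?case
    by (rule exI[of _ "L1 @ L2"]) (use L1 L2 in auto)
next
  case (mult f g)
  then obtain L1 L2 where
    L1: "\<forall>p\<in>set L1. fst p \<in> alg_poly n" "\<forall>x. f x = (\<Sum>p\<leftarrow>L1. fst p x * x n ^ snd p)" and
    L2: "\<forall>p\<in>set L2. fst p \<in> alg_poly n" "\<forall>x. g x = (\<Sum>p\<leftarrow>L2. fst p x * x n ^ snd p)"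
    by blast
  define L where "L = map (\<lambda>r. ((\<lambda>x. fst (fst r) x * fst (snd r) x), snd (fst r) + snd (snd r)))
      (concat (map (\<lambda>p. map (\<lambda>q. (p, q)) L2) L1))"
  have "\<forall>p\<in>set L. fst p \<in> alg_poly n"
    using L1 L2 by (auto simp: L_def intro!: alg_poly.mult)
  moreover have "f x * g x = (\<Sum>p\<leftarrow>L. fst p x * x n ^ snd p)" for x
  proof -
    have "f x * g x = (\<Sum>p\<leftarrow>L1. fst p x * x n ^ snd p) * (\<Sum>q\<leftarrow>L2. fst q x * x n ^ snd q)"
      using L1(2) L2(2) by simp
    also have "\<dots> = (\<Sum>r\<leftarrow>concat (map (\<lambda>p. map (\<lambda>q. (p, q)) L2) L1).
        (fst (fst r) x * x n ^ snd (fst r)) * (fst (snd r) x * x n ^ snd (snd r)))"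
      by (rule sum_list_prod_concat)
    also have "\<dots> = (\<Sum>p\<leftarrow>L. fst p x * x n ^ snd p)"
      by (simp add: L_def o_def power_add algebra_simps)
    finally show ?thesis .
  qed
  ultimately show ?case by blast
qed

definition polyOf :: "(((nat \<Rightarrow> real) \<Rightarrow> real) \<times> nat) list \<Rightarrow> (nat \<Rightarrow> real) \<Rightarrow> real poly" where
  "polyOf L x = (\<Sum>p\<leftarrow>L. monom (fst p x) (snd p))"

lemma poly_polyOf: "poly (polyOf L x) t = (\<Sum>p\<leftarrow>L. fst p x * t ^ snd p)"
  by (induction L) (auto simp: polyOf_def poly_monom)

lemma coeff_polyOf: "coeff (polyOf L x) e = (\<Sum>p\<leftarrow>L. if snd p = e then fst p x else 0)"
  by (induction L) (auto simp: polyOf_def coeff_monom)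

lemma ap_coeff:
  assumes "\<forall>p\<in>set L. fst p \<in> alg_poly n"
  shows "(\<lambda>x. coeff (polyOf L x) e) \<in> alg_poly n"
proof -
  have "(\<lambda>x. \<Sum>a\<leftarrow>map (\<lambda>p. if snd p = e then fst p else (\<lambda>x. 0)) L. a x) \<in> alg_poly n"
    using assms by (intro ap_sum_list) (auto intro: ap_const_rat)
  moreover have "(\<Sum>a\<leftarrow>map (\<lambda>p. if snd p = e then fst p else (\<lambda>x. 0)) L. a x) = coeff (polyOf L x) e" for x
    unfolding coeff_polyOf by (induction L) auto
  ultimately show ?thesis by simp
qed

lemma Rn_0: "Rn 0 = {\<lambda>_. undefined}"
  by (simp add: Rn_def)

lemma zero_set_null:
  "f \<in> alg_poly n \<Longrightarrow> x0 \<in> Rn n \<Longrightarrow> f x0 \<noteq> 0 \<Longrightarrow> {x \<in> Rn n. f x = 0} \<in> null_sets (lebn n)"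
proof (induction n arbitrary: f x0)
  case 0
  have "Rn 0 = {x0}" using 0(2) by (simp add: Rn_0)
  then have eq: "{x \<in> Rn 0. f x = 0} = {}" using 0(3) by auto
  show ?case unfolding eq by (rule null_sets.empty_sets)
next
  case (Suc n)
  obtain L where L: "\<forall>p\<in>set L. fst p \<in> alg_poly n" "\<forall>x. f x = (\<Sum>p\<leftarrow>L. fst p x * x n ^ snd p)"
    using ap_decomp[OF Suc.prems(1)] by blast
  have fP: "f x = poly (polyOf L x) (x n)" for x
    using L(2) by (simp add: poly_polyOf)
  have "polyOf L x0 \<noteq> 0" using Suc.prems(3) fP[of x0] by auto
  then obtain e where e: "coeff (polyOf L x0) e \<noteq> 0"
    using poly_eqI[of "polyOf L x0" 0] by auto
  define c where "c = (\<lambda>x. coeff (polyOf L x) e)"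
  have c: "c \<in> alg_poly n" unfolding c_def by (rule ap_coeff[OF L(1)])
  have Lloc: "fst p x = fst p y" if "p \<in> set L" "\<And>i. i < n \<Longrightarrow> x i = y i" for p x y
    using ap_local[of "fst p" n x y] L(1) that by auto
  have Ploc: "polyOf L x = polyOf L y" if "\<And>i. i < n \<Longrightarrow> x i = y i" for x y
    unfolding polyOf_def using Lloc[OF _ that]
    by (intro arg_cong[where f=sum_list] map_cong) auto
  define x0' where "x0' = restrict x0 {..<n}"
  have x0': "x0' \<in> Rn n" by (simp add: x0'_def Rn_def)
  have "c x0' = c x0" unfolding c_def by (rule arg_cong[OF Ploc]) (auto simp: x0'_def)
  then have "c x0' \<noteq> 0" using e by (simp add: c_def)
  from Suc.IH[OF c x0' this] have Zc: "{x \<in> Rn n. c x = 0} \<in> null_sets (lebn n)" .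
  define Z where "Z = {x \<in> Rn (Suc n). f x = 0}"
  have fm[measurable]: "f \<in> borel_measurable (PiM {..<Suc n} (\<lambda>_. lborel))"
    using ap_meas[OF Suc.prems(1)] by (simp add: lebn_def)
  have UN: "{..<Suc n} = {..<n} \<union> {n}" by auto
  have Zs: "Z \<in> sets (PiM ({..<n} \<union> {n}) (\<lambda>_. lborel))"
  proof -
    have "{x \<in> space (PiM {..<Suc n} (\<lambda>_. lborel)). f x = 0} \<in> sets (PiM {..<Suc n} (\<lambda>_. lborel))"
      by measurable
    then show ?thesis unfolding Z_def UN[symmetric] by (simp add: space_PiM Rn_def)
  qed
  define F where "F x' = (\<lambda>y. merge {..<n} {n} (x', y)) -` Z \<inter> space (PiM {n} (\<lambda>_. lborel::real measure))" for x'
  have "emeasure (PiM ({..<n} \<union> {n}) (\<lambda>_. lborel)) Z =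
      (\<integral>\<^sup>+x'. emeasure (PiM {n} (\<lambda>_. lborel)) (F x') \<partial>PiM {..<n} (\<lambda>_. lborel))"
    unfolding F_def using Zs by (intro lbs.emeasure_fold_integral) auto
  also have "\<dots> = (\<integral>\<^sup>+x'. 0 \<partial>PiM {..<n} (\<lambda>_. lborel::real measure))"
  proof (rule nn_integral_cong_AE)
    show "AE x' in PiM {..<n} (\<lambda>_. lborel). emeasure (PiM {n} (\<lambda>_. lborel)) (F x') = 0"
    proof (rule AE_I')
      show "{x \<in> Rn n. c x = 0} \<in> null_sets (PiM {..<n} (\<lambda>_. lborel))"
        using Zc by (simp add: lebn_def)
      show "{x' \<in> space (PiM {..<n} (\<lambda>_. lborel)). emeasure (PiM {n} (\<lambda>_. lborel)) (F x') \<noteq> 0} \<subseteq> {x \<in> Rn n. c x = 0}"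
      proof (safe)
        fix x' assume x': "x' \<in> space (PiM {..<n} (\<lambda>_. lborel::real measure))"
          and ne: "emeasure (PiM {n} (\<lambda>_. lborel)) (F x') \<noteq> 0"
        show "x' \<in> Rn n" using x' by (simp add: space_PiM Rn_def)
        show "c x' = 0"
        proof (rule ccontr)
          assume cx: "c x' \<noteq> 0"
          then have P0: "polyOf L x' \<noteq> 0" by (auto simp: c_def)
          define R where "R = {t. poly (polyOf L x') t = 0}"
          have finR: "finite R" unfolding R_def using poly_roots_finite[OF P0] .
          have "F x' \<subseteq> PiE {n} (\<lambda>_. R)"
          proof
            fix y assume y: "y \<in> F x'"
            then have yZ: "merge {..<n} {n} (x', y) \<in> Z" and ysp: "y \<in> PiE {n} (\<lambda>_. UNIV)"
              by (auto simp: F_def space_PiM)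
            have "polyOf L (merge {..<n} {n} (x', y)) = polyOf L x'"
              by (rule Ploc) (simp add: merge_def)
            moreover have "merge {..<n} {n} (x', y) n = y n" by (simp add: merge_def)
            ultimately have "poly (polyOf L x') (y n) = 0"
              using yZ fP[of "merge {..<n} {n} (x', y)"] by (simp add: Z_def)
            then show "y \<in> PiE {n} (\<lambda>_. R)" using ysp by (auto simp: R_def PiE_iff)
          qed
          moreover have "emeasure (PiM {n} (\<lambda>_. lborel)) (PiE {n} (\<lambda>_. R)) = 0"
            using finR by (subst lbs.emeasure_PiM) (auto intro: emeasure_lborel_countable countable_finite borel_closed finite_imp_closed)
          moreover have "PiE {n} (\<lambda>_. R) \<in> sets (PiM {n} (\<lambda>_. lborel))"
            using finR by (intro sets_PiM_I_finite) (auto intro: borel_closed finite_imp_closed)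
          ultimately have "emeasure (PiM {n} (\<lambda>_. lborel)) (F x') = 0"
            by (metis emeasure_mono le_zero_eq)
          with ne show False by simp
        qed
      qed
    qed
  qed
  finally have "emeasure (lebn (Suc n)) Z = 0" by (simp add: lebn_def UN)
  moreover have "Z \<in> sets (lebn (Suc n))" using Zs by (simp add: lebn_def UN)
  ultimately show ?case by (simp add: Z_def null_sets_def)
qed



lemma semialg_ae_int:
  "A \<in> semialg n \<Longrightarrow> \<exists>N\<in>null_sets (lebn n). \<forall>x\<in>A - N. \<exists>e>0. \<forall>y\<in>Rn n. (\<forall>i<n. \<bar>y i - x i\<bar> < e) \<longrightarrow> y \<in> A"
proof (induction A rule: semialg.induct)
  case (zero f)
  show ?case
  proof (cases "\<exists>x\<in>Rn n. f x \<noteq> 0")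
    case True
    then obtain x0 where "x0 \<in> Rn n" "f x0 \<noteq> 0" by blast
    from zero_set_null[OF zero this] show ?thesis by (intro bexI[of _ "{x \<in> Rn n. f x = 0}"]) auto
  next
    case False
    show ?thesis
      by (rule bexI[of _ "{}"]) (use False in \<open>auto intro!: exI[of _ 1]\<close>)
  qed
next
  case (pos g)
  show ?case
  proof (rule bexI[of _ "{}"], safe)
    fix x assume x: "x \<in> Rn n" "0 < g x"
    obtain d where d: "d > 0" "\<forall>y. (\<forall>i<n. \<bar>y i - x i\<bar> < d) \<longrightarrow> \<bar>g y - g x\<bar> < g x"
      using ap_eps[OF pos x(2)] by blast
    show "\<exists>e>0. \<forall>y\<in>Rn n. (\<forall>i<n. \<bar>y i - x i\<bar> < e) \<longrightarrow> y \<in> {x \<in> Rn n. 0 < g x}"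
    proof (rule exI[of _ d], intro conjI ballI impI)
      show "0 < d" by (rule d(1))
    next
      fix y assume "y \<in> Rn n" "\<forall>i<n. \<bar>y i - x i\<bar> < d"
      with d(2) have "\<bar>g y - g x\<bar> < g x" by blast
      then show "y \<in> {x \<in> Rn n. 0 < g x}" using \<open>y \<in> Rn n\<close> by auto
    qed
  qed
next
  case (inter A B)
  from inter.IH obtain N1 N2 where N1: "N1 \<in> null_sets (lebn n)" "\<forall>x\<in>A - N1. \<exists>e>0. \<forall>y\<in>Rn n. (\<forall>i<n. \<bar>y i - x i\<bar> < e) \<longrightarrow> y \<in> A"
    and N2: "N2 \<in> null_sets (lebn n)" "\<forall>x\<in>B - N2. \<exists>e>0. \<forall>y\<in>Rn n. (\<forall>i<n. \<bar>y i - x i\<bar> < e) \<longrightarrow> y \<in> B"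
    by blast
  show ?case
  proof (rule bexI[of _ "N1 \<union> N2"], intro ballI)
    fix x assume "x \<in> A \<inter> B - (N1 \<union> N2)"
    then have x: "x \<in> A" "x \<in> B" "x \<notin> N1" "x \<notin> N2" by auto
    then obtain e1 e2 where e1: "e1 > 0" "\<forall>y\<in>Rn n. (\<forall>i<n. \<bar>y i - x i\<bar> < e1) \<longrightarrow> y \<in> A"
      and e2: "e2 > 0" "\<forall>y\<in>Rn n. (\<forall>i<n. \<bar>y i - x i\<bar> < e2) \<longrightarrow> y \<in> B"
      using N1(2) N2(2) by blast
    show "\<exists>e>0. \<forall>y\<in>Rn n. (\<forall>i<n. \<bar>y i - x i\<bar> < e) \<longrightarrow> y \<in> A \<inter> B"
      by (rule exI[of _ "min e1 e2"]) (use e1 e2 in auto)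
  qed (use N1 N2 in auto)
next
  case (union A B)
  from union.IH obtain N1 N2 where N1: "N1 \<in> null_sets (lebn n)" "\<forall>x\<in>A - N1. \<exists>e>0. \<forall>y\<in>Rn n. (\<forall>i<n. \<bar>y i - x i\<bar> < e) \<longrightarrow> y \<in> A"
    and N2: "N2 \<in> null_sets (lebn n)" "\<forall>x\<in>B - N2. \<exists>e>0. \<forall>y\<in>Rn n. (\<forall>i<n. \<bar>y i - x i\<bar> < e) \<longrightarrow> y \<in> B"
    by blast
  show ?case
  proof (rule bexI[of _ "N1 \<union> N2"], intro ballI)
    fix x assume "x \<in> A \<union> B - (N1 \<union> N2)"
    then consider "x \<in> A" "x \<notin> N1" | "x \<in> B" "x \<notin> N2" by auto
    then show "\<exists>e>0. \<forall>y\<in>Rn n. (\<forall>i<n. \<bar>y i - x i\<bar> < e) \<longrightarrow> y \<in> A \<union> B"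
    proof cases
      case 1
      then obtain e1 where e1: "e1 > 0" "\<forall>y\<in>Rn n. (\<forall>i<n. \<bar>y i - x i\<bar> < e1) \<longrightarrow> y \<in> A"
        using N1(2) by blast
      show ?thesis by (rule exI[of _ e1]) (use e1 in auto)
    next
      case 2
      then obtain e2 where e2: "e2 > 0" "\<forall>y\<in>Rn n. (\<forall>i<n. \<bar>y i - x i\<bar> < e2) \<longrightarrow> y \<in> B"
        using N2(2) by blast
      show ?thesis by (rule exI[of _ e2]) (use e2 in auto)
    qed
  qed (use N1 N2 in auto)
qed

lemma semialg_closed_sup:
  "A \<in> semialg n \<Longrightarrow> \<exists>A'\<in>semialg n. A \<subseteq> A' \<and> closed A' \<and> A' - A \<in> null_sets (lebn n)"
proof (induction A rule: semialg.induct)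
  case (zero f)
  have "{x \<in> Rn n. f x = 0} - {x \<in> Rn n. f x = 0} = {}" by simp
  then have "{x \<in> Rn n. f x = 0} - {x \<in> Rn n. f x = 0} \<in> null_sets (lebn n)"
    by (simp only:) (rule null_sets.empty_sets)
  then show ?case
    using closed_zero[OF zero] semialg.zero[OF zero] by blast
next
  case (pos g)
  show ?case
  proof (cases "\<exists>x\<in>Rn n. g x \<noteq> 0")
    case True
    then obtain x0 where "x0 \<in> Rn n" "g x0 \<noteq> 0" by blast
    from zero_set_null[OF pos this] have N: "{x \<in> Rn n. g x = 0} \<in> null_sets (lebn n)" .
    have eq: "{x \<in> Rn n. g x \<ge> 0} - {x \<in> Rn n. g x > 0} = {x \<in> Rn n. g x = 0}" by auto
    have sub: "{x \<in> Rn n. g x > 0} \<subseteq> {x \<in> Rn n. g x \<ge> 0}" by auto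
    show ?thesis
      using semialg_ge[OF pos] sub closed_ge[OF pos] N unfolding eq[symmetric] by blast
  next
    case False
    then have eq: "{x \<in> Rn n. g x > 0} = {}" by auto
    have "{} - {} \<in> null_sets (lebn n)" by simp
    then show ?thesis unfolding eq using empty_semialg closed_empty by blast
  qed
next
  case (inter A B)
  from inter.IH obtain A' B' where A': "A' \<in> semialg n" "A \<subseteq> A'" "closed A'" "A' - A \<in> null_sets (lebn n)"
    and B': "B' \<in> semialg n" "B \<subseteq> B'" "closed B'" "B' - B \<in> null_sets (lebn n)" by blast
  have S: "A' \<inter> B' - A \<inter> B \<in> sets (lebn n)"
    using A'(1) B'(1) inter.hyps by (intro sets.Diff sets.Int semialg_sets)
  have N: "(A' \<inter> B') - (A \<inter> B) \<in> null_sets (lebn n)"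
    by (rule null_sets_subset[OF null_sets.Un[OF A'(4) B'(4)] S]) blast
  have "A \<inter> B \<subseteq> A' \<inter> B'" using A'(2) B'(2) by blast
  then show ?case using semialg.inter[OF A'(1) B'(1)] closed_Int[OF A'(3) B'(3)] N by blast
next
  case (union A B)
  from union.IH obtain A' B' where A': "A' \<in> semialg n" "A \<subseteq> A'" "closed A'" "A' - A \<in> null_sets (lebn n)"
    and B': "B' \<in> semialg n" "B \<subseteq> B'" "closed B'" "B' - B \<in> null_sets (lebn n)" by blast
  have S: "A' \<union> B' - (A \<union> B) \<in> sets (lebn n)"
    using A'(1) B'(1) union.hyps by (intro sets.Diff sets.Un semialg_sets)
  have N: "(A' \<union> B') - (A \<union> B) \<in> null_sets (lebn n)"
    by (rule null_sets_subset[OF null_sets.Un[OF A'(4) B'(4)] S]) blast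
  have "A \<union> B \<subseteq> A' \<union> B'" using A'(2) B'(2) by blast
  then show ?case using semialg.union[OF A'(1) B'(1)] closed_Un[OF A'(3) B'(3)] N by blast
qed

lemma semialg_pos_interior:
  assumes "A \<in> semialg n" "emeasure (lebn n) A \<noteq> 0"
  shows "nonempty_interior n A"
proof -
  obtain N where N: "N \<in> null_sets (lebn n)" "\<forall>x\<in>A - N. \<exists>e>0. \<forall>y\<in>Rn n. (\<forall>i<n. \<bar>y i - x i\<bar> < e) \<longrightarrow> y \<in> A"
    using semialg_ae_int[OF assms(1)] by blast
  have "A - N \<noteq> {}"
  proof
    assume "A - N = {}"
    then have "A \<subseteq> N" by auto
    then have "A \<in> null_sets (lebn n)" using null_sets_subset[OF N(1) semialg_sets[OF assms(1)]] by blast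
    then show False using assms(2) by (simp add: null_sets_def)
  qed
  then obtain x where "x \<in> A - N" by blast
  then show ?thesis using N(2) unfolding nonempty_interior_def by blast
qed

lemma compact_bounded_Rn:
  fixes K :: "(nat \<Rightarrow> real) set" and n :: nat
  assumes "compact K"
  shows "\<exists>R::nat. \<forall>x\<in>K. \<forall>i<n. \<bar>x i\<bar> \<le> real R"
proof -
  have "\<exists>B. \<forall>x\<in>K. \<bar>x i\<bar> \<le> B" for i
  proof -
    have "compact ((\<lambda>x. x i) ` K)"
      by (rule compact_continuous_image[OF continuous_on_subset[OF continuous_on_product_coordinates] assms]) simp
    then have "bounded ((\<lambda>x. x i) ` K)" by (rule compact_imp_bounded)
    then show ?thesis unfolding bounded_real by auto
  qed
  then obtain B where B: "\<And>i x. x \<in> K \<Longrightarrow> \<bar>x i\<bar> \<le> B i" by metis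
  obtain R :: nat where R: "(\<Sum>i<n. \<bar>B i\<bar>) \<le> real R" using real_arch_simple by blast
  have "\<bar>x i\<bar> \<le> real R" if "x \<in> K" "i < n" for x i
  proof -
    have "\<bar>x i\<bar> \<le> \<bar>B i\<bar>" using B[OF that(1), of i] by linarith
    also have "\<dots> \<le> (\<Sum>i<n. \<bar>B i\<bar>)" using that(2) by (intro member_le_sum) auto
    finally show ?thesis using R by simp
  qed
  then show ?thesis by blast
qed

lemma compact_in_cbx:
  assumes "compact K" "K \<subseteq> Rn n"
  obtains R :: nat where "K \<subseteq> cbx n (\<lambda>_. - real R) (\<lambda>_. real R)"
proof -
  obtain R :: nat where R: "\<forall>x\<in>K. \<forall>i<n. \<bar>x i\<bar> \<le> real R" using compact_bounded_Rn[OF assms(1)] by blast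
  have "K \<subseteq> cbx n (\<lambda>_. - real R) (\<lambda>_. real R)"
    using R assms(2) unfolding cbx_def abs_le_iff by force
  then show ?thesis by (rule that)
qed

lemma compact_finite_measure:
  assumes "compact K" "K \<subseteq> Rn n"
  shows "emeasure (lebn n) K \<noteq> \<infinity>"
proof -
  obtain R :: nat where R: "K \<subseteq> cbx n (\<lambda>_. - real R) (\<lambda>_. real R)" using compact_in_cbx[OF assms] .
  have "emeasure (lebn n) K \<le> emeasure (lebn n) (cbx n (\<lambda>_. - real R) (\<lambda>_. real R))"
    by (rule emeasure_mono[OF R]) (auto intro!: semialg_sets cbx_semialg ralg_rat)
  also have "\<dots> = ennreal (\<Prod>i<n. real R - - real R)" by (rule emeasure_cbx) simp
  finally show ?thesis by (auto simp: top_unique)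
qed



lemma obx_sub_cbx: "obx n a b \<subseteq> cbx n a b"
  unfolding obx_def cbx_def by auto

lemma obx_open_eq: "K \<subseteq> Rn n \<Longrightarrow> K - obx n a b = K - {x. \<forall>i<n. a i < x i \<and> x i < b i}"
  unfolding obx_def by blast

lemma rem_box:
  assumes K: "K \<in> semialg n" "compact K"
    and ab: "\<And>i. i < n \<Longrightarrow> ralg (a i)" "\<And>i. i < n \<Longrightarrow> ralg (b i)" "\<And>i. i < n \<Longrightarrow> a i \<le> b i"
    and sub: "obx n a b \<subseteq> K"
  shows "K - obx n a b \<in> semialg n \<and> compact (K - obx n a b) \<and>
         measure (lebn n) (K - obx n a b) = measure (lebn n) K - (\<Prod>i<n. b i - a i)"
proof (intro conjI)
  have O: "obx n a b \<in> semialg n" by (rule obx_semialg) (use ab in auto)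
  show "K - obx n a b \<in> semialg n" by (rule semialg_diff[OF K(1) O])
  have KR: "K \<subseteq> Rn n" by (rule semialg_sub[OF K(1)])
  show "compact (K - obx n a b)"
    unfolding obx_open_eq[OF KR] by (rule compact_diff[OF K(2) open_obx_core])
  have fin: "emeasure (lebn n) K \<noteq> \<infinity>" by (rule compact_finite_measure[OF K(2) KR])
  have "measure (lebn n) (K - obx n a b) = measure (lebn n) K - measure (lebn n) (obx n a b)"
    by (rule measure_Diff[OF fin semialg_sets[OF K(1)] semialg_sets[OF O] sub])
  moreover have "measure (lebn n) (obx n a b) = (\<Prod>i<n. b i - a i)"
    by (rule measure_eq_emeasure_eq_ennreal) (auto intro!: prod_nonneg emeasure_obx simp: ab)
  ultimately show "measure (lebn n) (K - obx n a b) = measure (lebn n) K - (\<Prod>i<n. b i - a i)"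
    by simp
qed

definition lo :: "nat \<Rightarrow> (nat \<Rightarrow> int) \<Rightarrow> nat \<Rightarrow> real" where
  "lo m z i = of_int (z i) / 2 ^ m"
definition hi :: "nat \<Rightarrow> (nat \<Rightarrow> int) \<Rightarrow> nat \<Rightarrow> real" where
  "hi m z i = (of_int (z i) + 1) / 2 ^ m"

definition ccube :: "nat \<Rightarrow> nat \<Rightarrow> (nat \<Rightarrow> int) \<Rightarrow> (nat \<Rightarrow> real) set" where
  "ccube n m z = cbx n (lo m z) (hi m z)"
definition ocube :: "nat \<Rightarrow> nat \<Rightarrow> (nat \<Rightarrow> int) \<Rightarrow> (nat \<Rightarrow> real) set" where
  "ocube n m z = obx n (lo m z) (hi m z)"
definition hcube :: "nat \<Rightarrow> nat \<Rightarrow> (nat \<Rightarrow> int) \<Rightarrow> (nat \<Rightarrow> real) set" where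
  "hcube n m z = {x \<in> Rn n. \<forall>i<n. lo m z i \<le> x i \<and> x i < hi m z i}"

lemma lo_rat: "lo m z i \<in> \<rat>" unfolding lo_def by simp
lemma hi_rat: "hi m z i \<in> \<rat>" unfolding hi_def by simp
lemma hi_lo: "hi m z i - lo m z i = 1 / 2 ^ m" unfolding hi_def lo_def by (simp add: field_simps)
lemma lo_le_hi: "lo m z i \<le> hi m z i" unfolding hi_def lo_def by (simp add: divide_right_mono)

lemma ccube_iff: "y \<in> ccube n m z \<longleftrightarrow> y \<in> Rn n \<and> (\<forall>i<n. of_int (z i) \<le> y i * 2 ^ m \<and> y i * 2 ^ m \<le> of_int (z i) + 1)"
  unfolding ccube_def cbx_def lo_def hi_def by (simp add: pos_divide_le_eq pos_le_divide_eq)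

lemma ocube_iff: "y \<in> ocube n m z \<longleftrightarrow> y \<in> Rn n \<and> (\<forall>i<n. of_int (z i) < y i * 2 ^ m \<and> y i * 2 ^ m < of_int (z i) + 1)"
  unfolding ocube_def obx_def lo_def hi_def by (simp add: pos_divide_less_eq pos_less_divide_eq)

lemma hcube_iff: "y \<in> hcube n m z \<longleftrightarrow> y \<in> Rn n \<and> (\<forall>i<n. of_int (z i) \<le> y i * 2 ^ m \<and> y i * 2 ^ m < of_int (z i) + 1)"
  unfolding hcube_def lo_def hi_def by (simp add: pos_divide_le_eq pos_less_divide_eq)

lemma hcube_PiE: "hcube n m z = PiE {..<n} (\<lambda>i. {lo m z i..<hi m z i})"
  unfolding hcube_def Rn_def by (rule set_eqI) (simp add: PiE_iff, blast)

lemma hcube_sub: "hcube n m z \<subseteq> ccube n m z"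
  by (auto simp: hcube_iff ccube_iff less_imp_le)

lemma hcube_sets: "hcube n m z \<in> sets (lebn n)"
  unfolding hcube_PiE lebn_def by (rule sets_PiM_I_finite) auto

lemma emeasure_hcube: "emeasure (lebn n) (hcube n m z) = ennreal ((1 / 2 ^ m) ^ n)"
  unfolding hcube_PiE lebn_def
  by (subst lbs.emeasure_PiM) (auto simp: hi_lo lo_le_hi prod_ennreal[symmetric] ennreal_power[symmetric])

definition zf :: "nat \<Rightarrow> nat \<Rightarrow> (nat \<Rightarrow> real) \<Rightarrow> nat \<Rightarrow> int" where
  "zf n m x = (\<lambda>i. if i < n then \<lfloor>x i * 2 ^ m\<rfloor> else undefined)"

definition Zext :: "nat \<Rightarrow> (nat \<Rightarrow> int) set" where
  "Zext n = PiE {..<n} (\<lambda>_. UNIV)"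

lemma zf_Zext: "zf n m x \<in> Zext n"
  unfolding zf_def Zext_def by (simp add: PiE_iff extensional_def)

lemma in_hcube_zf: "x \<in> Rn n \<Longrightarrow> x \<in> hcube n m (zf n m x)"
  unfolding hcube_iff zf_def by (simp add: of_int_floor_le)

lemma int_of_less_plus1: "real_of_int a < real_of_int b + 1 \<Longrightarrow> a \<le> b"
  by (metis of_int_1 of_int_add of_int_less_iff zle_add1_eq_le less_le_not_le)

lemma Zext_eq: "z \<in> Zext n \<Longrightarrow> z' \<in> Zext n \<Longrightarrow> (\<And>i. i < n \<Longrightarrow> z i = z' i) \<Longrightarrow> z = z'"
  unfolding Zext_def by (rule PiE_ext) auto

lemma ccube_ocube_disj:
  assumes "z \<in> Zext n" "z' \<in> Zext n" "z \<noteq> z'"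
  shows "ccube n m z' \<inter> ocube n m z = {}"
proof (rule ccontr)
  assume "ccube n m z' \<inter> ocube n m z \<noteq> {}"
  then obtain y where y: "y \<in> ccube n m z'" "y \<in> ocube n m z" by blast
  have "z i = z' i" if i: "i < n" for i
  proof -
    have "of_int (z' i) \<le> y i * 2 ^ m" "y i * 2 ^ m \<le> of_int (z' i) + 1"
      "of_int (z i) < y i * 2 ^ m" "y i * 2 ^ m < of_int (z i) + 1"
      using y i unfolding ccube_iff ocube_iff by auto
    then have "real_of_int (z' i) < real_of_int (z i) + 1" "real_of_int (z i) < real_of_int (z' i) + 1"
      by linarith+
    then show ?thesis using int_of_less_plus1 by (meson order_antisym)
  qed
  then have "z = z'" by (rule Zext_eq[OF assms(1,2)])
  with assms(3) show False by simp
qed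

lemma ccube_mono_Suc:
  assumes "x \<in> hcube n m z"
  shows "ccube n (Suc m) (zf n (Suc m) x) \<subseteq> ccube n m z"
proof
  fix y assume y: "y \<in> ccube n (Suc m) (zf n (Suc m) x)"
  have "of_int (z i) \<le> y i * 2 ^ m \<and> y i * 2 ^ m \<le> of_int (z i) + 1" if i: "i < n" for i
  proof -
    have x1: "of_int (z i) \<le> x i * 2 ^ m" "x i * 2 ^ m < of_int (z i) + 1"
      using assms i unfolding hcube_iff by auto
    define w where "w = \<lfloor>x i * 2 ^ Suc m\<rfloor>"
    have w: "of_int w \<le> x i * 2 ^ Suc m" "x i * 2 ^ Suc m < of_int w + 1"
      unfolding w_def by linarith+
    have y1: "of_int w \<le> y i * 2 ^ Suc m" "y i * 2 ^ Suc m \<le> of_int w + 1"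
      using y i unfolding ccube_iff zf_def w_def by auto
    have "2 * of_int (z i) \<le> x i * 2 ^ Suc m" using x1 by simp
    then have "2 * of_int (z i) < (of_int w + 1 :: real)" using w by linarith
    then have "2 * z i \<le> w" using int_of_less_plus1[of "2 * z i" w] by simp
    moreover have "of_int w < (2 * of_int (z i) + 2 :: real)" using w x1 by simp
    then have "w \<le> 2 * z i + 1" using int_of_less_plus1[of w "2 * z i + 1"] by simp
    ultimately have "2 * real_of_int (z i) \<le> of_int w" "of_int w + 1 \<le> 2 * real_of_int (z i) + 2"
      by linarith+
    then show ?thesis using y1 by simp
  qed
  moreover have "y \<in> Rn n" using y unfolding ccube_iff by auto
  ultimately show "y \<in> ccube n m z" unfolding ccube_iff by auto
qed

lemma ccube_small:
  assumes "x \<in> Rn n" "y \<in> ccube n m (zf n m x)" "i < n"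
  shows "\<bar>y i - x i\<bar> \<le> 1 / 2 ^ m"
proof -
  have a: "of_int \<lfloor>x i * 2 ^ m\<rfloor> \<le> y i * 2 ^ m" "y i * 2 ^ m \<le> of_int \<lfloor>x i * 2 ^ m\<rfloor> + 1"
    using assms unfolding ccube_iff zf_def by auto
  have b: "of_int \<lfloor>x i * 2 ^ m\<rfloor> \<le> x i * 2 ^ m" "x i * 2 ^ m < of_int \<lfloor>x i * 2 ^ m\<rfloor> + 1"
    by linarith+
  have "\<bar>y i * 2 ^ m - x i * 2 ^ m\<bar> \<le> 1" using a b by linarith
  then have "\<bar>y i - x i\<bar> * 2 ^ m \<le> 1" by (simp add: abs_mult left_diff_distrib[symmetric])
  then show ?thesis by (simp add: pos_le_divide_eq)
qed



lemma rem_grid: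
  fixes Z :: "(nat \<Rightarrow> int) set"
  assumes "finite Z" "0 < n"
  shows "Z \<subseteq> Zext n \<Longrightarrow> K \<in> semialg n \<Longrightarrow> compact K \<Longrightarrow> (\<forall>z\<in>Z. ccube n m z \<subseteq> K) \<Longrightarrow> 0 \<le> c \<Longrightarrow>
    c \<le> real (card Z) * (1 / 2 ^ m) ^ n \<Longrightarrow> ralg c \<Longrightarrow>
    \<exists>K'. K' \<in> semialg n \<and> compact K' \<and> measure (lebn n) K' = measure (lebn n) K - c"
  using assms(1)
proof (induction Z arbitrary: K c rule: finite_induct)
  case empty
  then have "c = 0" by simp
  then show ?case using empty by auto
next
  case (insert z Z)
  define u :: real where "u = (1 / 2 ^ m) ^ n"
  have zZ: "z \<in> Zext n" "Z \<subseteq> Zext n" using insert.prems(1) by auto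
  have cz: "ccube n m z \<subseteq> K" using insert.prems(4) by auto
  obtain n' where n: "n = Suc n'" using \<open>0 < n\<close> by (cases n) auto
  show ?case
  proof (cases "c \<le> u")
    case True
    define q :: real where "q = (2 ^ m) ^ n'"
    have q: "q \<in> \<rat>" "q \<noteq> 0" "q > 0" unfolding q_def by simp_all
    define b where "b i = (if i = 0 then q * c + lo m z 0 else hi m z i)" for i
    have qc: "q * c \<le> 1 / 2 ^ m"
    proof -
      have "q * c \<le> q * u" using True q(3) by (intro mult_left_mono) auto
      also have "q * u = 1 / 2 ^ m" unfolding q_def u_def n
        by (simp add: power_mult_distrib[symmetric] power_one_over field_simps)
      finally show ?thesis .
    qed
    have b_le: "b i \<le> hi m z i" for i
      using qc hi_lo[of m z 0] by (auto simp: b_def)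
    have lo_le: "lo m z i \<le> b i" for i
      using q(3) insert.prems(5) lo_le_hi[of m z i] by (auto simp: b_def)
    have ralg_b: "ralg (b i)" for i
      unfolding b_def using ralg_add_rat[OF ralg_mult_rat[OF insert.prems(7) q(1,2)] lo_rat] ralg_rat[OF hi_rat]
      by auto
    have sub: "obx n (lo m z) b \<subseteq> K"
    proof -
      have "obx n (lo m z) b \<subseteq> ccube n m z"
      proof
        fix x assume "x \<in> obx n (lo m z) b"
        then have x: "x \<in> Rn n" "\<forall>i<n. lo m z i < x i \<and> x i < b i" by (auto simp: obx_def)
        have "\<forall>i<n. lo m z i \<le> x i \<and> x i \<le> hi m z i"
        proof (intro allI impI)
          fix i assume "i < n"
          then have "lo m z i < x i" "x i < b i" using x(2) by auto
          with b_le[of i] show "lo m z i \<le> x i \<and> x i \<le> hi m z i" by linarith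
        qed
        then show "x \<in> ccube n m z" unfolding ccube_def cbx_def using x(1) by blast
      qed
      then show ?thesis using cz by blast
    qed
    have prod: "(\<Prod>i<n. b i - lo m z i) = c"
    proof -
      have "(\<Prod>i<n. b i - lo m z i) = (b 0 - lo m z 0) * (\<Prod>i<n'. b (Suc i) - lo m z (Suc i))"
        unfolding n by (rule prod.lessThan_Suc_shift)
      also have "(\<Prod>i<n'. b (Suc i) - lo m z (Suc i)) = (1 / 2 ^ m) ^ n'"
        by (simp add: b_def hi_lo)
      also have "(b 0 - lo m z 0) * (1 / 2 ^ m) ^ n' = c"
        unfolding b_def q_def by (simp add: power_mult_distrib[symmetric] power_one_over field_simps)
      finally show ?thesis .
    qed
    have "K - obx n (lo m z) b \<in> semialg n \<and> compact (K - obx n (lo m z) b) \<and>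
         measure (lebn n) (K - obx n (lo m z) b) = measure (lebn n) K - (\<Prod>i<n. b i - lo m z i)"
      by (rule rem_box[OF insert.prems(2,3) _ _ _ sub]) (auto intro: ralg_rat[OF lo_rat] ralg_b lo_le)
    then show ?thesis unfolding prod by blast
  next
    case False
    have sub: "obx n (lo m z) (hi m z) \<subseteq> K" using cz obx_sub_cbx unfolding ccube_def by blast
    have R: "K - ocube n m z \<in> semialg n \<and> compact (K - ocube n m z) \<and>
         measure (lebn n) (K - ocube n m z) = measure (lebn n) K - (\<Prod>i<n. hi m z i - lo m z i)"
      unfolding ocube_def
      by (rule rem_box[OF insert.prems(2,3) _ _ _ sub]) (auto intro: ralg_rat[OF lo_rat] ralg_rat[OF hi_rat] lo_le_hi)
    have pu: "(\<Prod>i<n. hi m z i - lo m z i) = u" by (simp add: hi_lo u_def)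
    have cov: "\<forall>z'\<in>Z. ccube n m z' \<subseteq> K - ocube n m z"
    proof
      fix z' assume z': "z' \<in> Z"
      then have "z \<noteq> z'" using insert.hyps(2) by auto
      then have "ccube n m z' \<inter> ocube n m z = {}"
        using ccube_ocube_disj[OF zZ(1) _ ] zZ(2) z' by auto
      moreover have "ccube n m z' \<subseteq> K" using insert.prems(4) z' by auto
      ultimately show "ccube n m z' \<subseteq> K - ocube n m z" by blast
    qed
    have u_rat: "- u \<in> \<rat>" unfolding u_def by simp
    have "\<exists>K'. K' \<in> semialg n \<and> compact K' \<and> measure (lebn n) K' = measure (lebn n) (K - ocube n m z) - (c - u)"
    proof (rule insert.IH)
      show "Z \<subseteq> Zext n" by (rule zZ(2))
      show "K - ocube n m z \<in> semialg n" "compact (K - ocube n m z)" using R by auto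
      show "\<forall>z'\<in>Z. ccube n m z' \<subseteq> K - ocube n m z" by (rule cov)
      show "0 \<le> c - u" using False by simp
      show "c - u \<le> real (card Z) * (1 / 2 ^ m) ^ n"
        using insert.prems(6) insert.hyps by (simp add: u_def algebra_simps)
      show "ralg (c - u)" using ralg_add_rat[OF insert.prems(7) u_rat] by simp
    qed
    then show ?thesis using R pu by auto
  qed
qed

lemma sub_lemma:
  assumes n: "0 < n" and K: "K \<in> semialg n" "compact K"
    and c: "ralg c" "0 \<le> c" "c < measure (lebn n) K"
  shows "\<exists>K'. K' \<in> semialg n \<and> compact K' \<and> measure (lebn n) K' = measure (lebn n) K - c"
proof -
  have KR: "K \<subseteq> Rn n" by (rule semialg_sub[OF K(1)])
  obtain N where N: "N \<in> null_sets (lebn n)" "\<forall>x\<in>K - N. \<exists>e>0. \<forall>y\<in>Rn n. (\<forall>i<n. \<bar>y i - x i\<bar> < e) \<longrightarrow> y \<in> K"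
    using semialg_ae_int[OF K(1)] by blast
  obtain R :: nat where R: "K \<subseteq> cbx n (\<lambda>_. - real R) (\<lambda>_. real R)" using compact_in_cbx[OF K(2) KR] .
  define Zs where "Zs m = {z \<in> Zext n. ccube n m z \<subseteq> K}" for m
  define G where "G m = (\<Union>z\<in>Zs m. hcube n m z)" for m
  have finZ: "finite (Zs m)" for m
  proof -
    define M :: int where "M = int R * 2 ^ m"
    have "Zs m \<subseteq> PiE {..<n} (\<lambda>_. {-M..M})"
    proof
      fix z assume z: "z \<in> Zs m"
      then have zE: "z \<in> Zext n" and zK: "ccube n m z \<subseteq> K" by (auto simp: Zs_def)
      define p where "p = (\<lambda>i. if i < n then lo m z i else undefined)"
      have pR: "p \<in> Rn n" by (simp add: p_def Rn_def PiE_iff extensional_def)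
      have "p \<in> ccube n m z"
        unfolding ccube_def cbx_def using lo_le_hi[of m z] pR by (simp add: p_def)
      then have "p \<in> cbx n (\<lambda>_. - real R) (\<lambda>_. real R)" using zK R by blast
      then have "- real R \<le> lo m z i \<and> lo m z i \<le> real R" if "i < n" for i
        using that unfolding cbx_def p_def by auto
      then have "- real R * 2 ^ m \<le> of_int (z i) \<and> of_int (z i) \<le> real R * 2 ^ m" if "i < n" for i
        using that unfolding lo_def by (auto simp: pos_divide_le_eq pos_le_divide_eq)
      have RM: "real_of_int M = real R * 2 ^ m" unfolding M_def by simp
      have "- M \<le> z i \<and> z i \<le> M" if i: "i < n" for i
      proof -
        have "real_of_int (- M) \<le> real_of_int (z i)" "real_of_int (z i) \<le> real_of_int M"
          using \<open>\<And>i. i < n \<Longrightarrow> - real R * 2 ^ m \<le> of_int (z i) \<and> of_int (z i) \<le> real R * 2 ^ m\<close>[OF i] RM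
          by simp_all
        then show ?thesis by (simp only: of_int_le_iff)
      qed
      moreover have "z \<in> extensional {..<n}" using zE by (simp add: Zext_def PiE_iff)
      ultimately show "z \<in> PiE {..<n} (\<lambda>_. {-M..M})"
        by (simp add: PiE_iff)
    qed
    moreover have "finite (PiE {..<n} (\<lambda>_. {-M..M}))" by (intro finite_PiE) auto
    ultimately show ?thesis using finite_subset by blast
  qed
  have Gsets: "G m \<in> sets (lebn n)" for m
    unfolding G_def using finZ hcube_sets by (intro sets.finite_UN) auto
  have GK: "G m \<subseteq> K" for m
    unfolding G_def Zs_def using hcube_sub by blast
  have inc: "incseq G"
  proof (rule incseq_SucI)
    fix m
    show "G m \<subseteq> G (Suc m)"
    proof
      fix x assume "x \<in> G m"
      then obtain z where z: "z \<in> Zs m" "x \<in> hcube n m z" unfolding G_def by blast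
      have xR: "x \<in> Rn n" using z(2) unfolding hcube_def by auto
      have "ccube n (Suc m) (zf n (Suc m) x) \<subseteq> K"
        using ccube_mono_Suc[OF z(2)] z(1) unfolding Zs_def by blast
      then have "zf n (Suc m) x \<in> Zs (Suc m)" unfolding Zs_def using zf_Zext by blast
      then show "x \<in> G (Suc m)" unfolding G_def using in_hcube_zf[OF xR] by blast
    qed
  qed
  have cover: "K - N \<subseteq> (\<Union>m. G m)"
  proof
    fix x assume x: "x \<in> K - N"
    then obtain e where e: "e > 0" "\<forall>y\<in>Rn n. (\<forall>i<n. \<bar>y i - x i\<bar> < e) \<longrightarrow> y \<in> K"
      using N(2) by blast
    obtain m where m: "(1/2::real) ^ m < e" using real_arch_pow_inv[OF e(1), of "1/2"] by auto
    have xR: "x \<in> Rn n" using x KR by auto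
    have "ccube n m (zf n m x) \<subseteq> K"
    proof
      fix y assume y: "y \<in> ccube n m (zf n m x)"
      have yR: "y \<in> Rn n" using y unfolding ccube_iff by auto
      have "\<bar>y i - x i\<bar> < e" if "i < n" for i
        using ccube_small[OF xR y that] m by (simp add: power_one_over)
      then show "y \<in> K" using e(2) yR by blast
    qed
    then have "zf n m x \<in> Zs m" unfolding Zs_def using zf_Zext by blast
    then show "x \<in> (\<Union>m. G m)" unfolding G_def using in_hcube_zf[OF xR] by blast
  qed
  have fin: "emeasure (lebn n) K \<noteq> \<infinity>" by (rule compact_finite_measure[OF K(2) KR])
  have "ennreal c < ennreal (measure (lebn n) K)" using c by (simp add: ennreal_less_iff)
  also have "ennreal (measure (lebn n) K) = emeasure (lebn n) K"
    using fin by (simp add: emeasure_eq_ennreal_measure)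
  also have "\<dots> = emeasure (lebn n) (K - N)"
    by (rule emeasure_Diff_null_set[OF N(1) semialg_sets[OF K(1)], symmetric])
  also have "\<dots> \<le> emeasure (lebn n) (\<Union>m. G m)"
    by (rule emeasure_mono[OF cover]) (use Gsets in auto)
  also have "\<dots> = (SUP m. emeasure (lebn n) (G m))"
    by (rule SUP_emeasure_incseq[symmetric]) (use Gsets inc in auto)
  finally obtain m where m: "ennreal c < emeasure (lebn n) (G m)"
    by (auto simp: less_SUP_iff)
  have "emeasure (lebn n) (G m) \<le> (\<Sum>z\<in>Zs m. emeasure (lebn n) (hcube n m z))"
    unfolding G_def by (rule emeasure_subadditive_finite[OF finZ]) (use hcube_sets in auto)
  also have "\<dots> = of_nat (card (Zs m)) * ennreal ((1 / 2 ^ m) ^ n)"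
    by (simp add: emeasure_hcube)
  also have "\<dots> = ennreal (real (card (Zs m)) * (1 / 2 ^ m) ^ n)"
    by (simp add: ennreal_of_nat_eq_real_of_nat ennreal_mult)
  finally have "ennreal c < ennreal (real (card (Zs m)) * (1 / 2 ^ m) ^ n)"
    using m by (meson less_le_trans)
  then have cle: "c \<le> real (card (Zs m)) * (1 / 2 ^ m) ^ n"
    using c(2) by (simp add: ennreal_less_iff)
  show ?thesis
  proof (rule rem_grid[OF finZ n])
    show "Zs m \<subseteq> Zext n" unfolding Zs_def by auto
    show "\<forall>z\<in>Zs m. ccube n m z \<subseteq> K" unfolding Zs_def by auto
  qed (use K c cle in auto)
qed



lemma add_lemma:
  assumes n: "0 < n" and K: "K \<in> semialg n" "compact K" and c: "ralg c" "0 \<le> c"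
  shows "\<exists>K'. K' \<in> semialg n \<and> compact K' \<and> measure (lebn n) K' = measure (lebn n) K + c"
proof -
  have KR: "K \<subseteq> Rn n" by (rule semialg_sub[OF K(1)])
  obtain R :: nat where R: "K \<subseteq> cbx n (\<lambda>_. - real R) (\<lambda>_. real R)" using compact_in_cbx[OF K(2) KR] .
  obtain n' where n': "n = Suc n'" using n by (cases n) auto
  define a :: "nat \<Rightarrow> real" where "a i = (if i = 0 then real R + 1 else 0)" for i
  define b :: "nat \<Rightarrow> real" where "b i = (if i = 0 then c + (real R + 1) else 1)" for i
  define D where "D = cbx n a b"
  have ab: "a i \<le> b i" for i using c(2) by (simp add: a_def b_def)
  have Ds: "D \<in> semialg n"
    unfolding D_def
  proof (rule cbx_semialg)
    fix i show "ralg (a i)" unfolding a_def by (auto intro: ralg_rat)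
    show "ralg (b i)" unfolding b_def using ralg_add_rat[OF c(1), of "real R + 1"] by (auto intro: ralg_rat)
  qed
  have disj: "K \<inter> D = {}"
  proof (rule ccontr)
    assume "K \<inter> D \<noteq> {}"
    then obtain x where "x \<in> K" "x \<in> D" by blast
    then have "x 0 \<le> real R" "real R + 1 \<le> x 0"
      using R n unfolding D_def cbx_def a_def by auto
    then show False by simp
  qed
  have finK: "emeasure (lebn n) K \<noteq> \<infinity>" by (rule compact_finite_measure[OF K(2) KR])
  have finD: "emeasure (lebn n) D \<noteq> \<infinity>"
    by (rule compact_finite_measure[OF _ semialg_sub[OF Ds]]) (simp add: D_def compact_cbx)
  have "measure (lebn n) (K \<union> D) = measure (lebn n) K + measure (lebn n) D"
    by (rule measure_Union[OF finK finD semialg_sets[OF K(1)] semialg_sets[OF Ds] disj])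
  moreover have "measure (lebn n) D = (\<Prod>i<n. b i - a i)"
    unfolding D_def by (rule measure_eq_emeasure_eq_ennreal) (auto intro!: prod_nonneg emeasure_cbx simp: ab)
  moreover have "(\<Prod>i<n. b i - a i) = c"
    unfolding n' prod.lessThan_Suc_shift by (simp add: a_def b_def)
  ultimately have "measure (lebn n) (K \<union> D) = measure (lebn n) K + c" by simp
  moreover have "K \<union> D \<in> semialg n" by (rule semialg.union[OF K(1) Ds])
  moreover have "compact (K \<union> D)" unfolding D_def by (rule compact_Un[OF K(2) compact_cbx])
  ultimately show ?thesis by blast
qed

lemma cminus_lemma:
  assumes n: "0 < n" and K: "K \<in> semialg n" "compact K" and c: "ralg c" "measure (lebn n) K < c"
  shows "\<exists>K'. K' \<in> semialg n \<and> compact K' \<and> measure (lebn n) K' = c - measure (lebn n) K"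
proof -
  have KR: "K \<subseteq> Rn n" by (rule semialg_sub[OF K(1)])
  obtain R :: nat where R: "K \<subseteq> cbx n (\<lambda>_. - real R) (\<lambda>_. real R)" using compact_in_cbx[OF K(2) KR] .
  define B where "B = cbx n (\<lambda>_. - real R) (\<lambda>_. real R)"
  define M where "M = (2 * real R) ^ n"
  have Mq: "M \<in> \<rat>" unfolding M_def by simp
  have Bs: "B \<in> semialg n" unfolding B_def by (rule cbx_semialg) (auto intro: ralg_rat)
  have BR: "B \<subseteq> Rn n" unfolding B_def cbx_def by auto
  have finB: "emeasure (lebn n) B \<noteq> \<infinity>"
    by (rule compact_finite_measure[OF _ BR]) (simp add: B_def compact_cbx)
  have "emeasure (lebn n) B = ennreal (\<Prod>i<n. real R - - real R)"
    unfolding B_def by (rule emeasure_cbx) simp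
  also have "(\<Prod>i<n. real R - - real R) = M" unfolding M_def by simp
  finally have mB: "measure (lebn n) B = M"
    by (intro measure_eq_emeasure_eq_ennreal) (auto simp: M_def)
  define Cc where "Cc = Rn n - K"
  have Ccs: "Cc \<in> semialg n" unfolding Cc_def by (rule semialg_compl[OF K(1)])
  obtain C' where C': "C' \<in> semialg n" "Cc \<subseteq> C'" "closed C'" "C' - Cc \<in> null_sets (lebn n)"
    using semialg_closed_sup[OF Ccs] by blast
  define L where "L = B \<inter> C'"
  have Ls: "L \<in> semialg n" unfolding L_def by (rule semialg.inter[OF Bs C'(1)])
  have Lc: "compact L" unfolding L_def B_def by (rule compact_Int_closed[OF compact_cbx C'(3)])
  have eqL: "L - (C' - Cc) = B - K" using C'(2) BR unfolding L_def Cc_def by blast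
  have "emeasure (lebn n) L = emeasure (lebn n) (L - (C' - Cc))"
    by (rule emeasure_Diff_null_set[OF C'(4) semialg_sets[OF Ls], symmetric])
  also have "\<dots> = emeasure (lebn n) (B - K)" unfolding eqL ..
  finally have "measure (lebn n) L = measure (lebn n) (B - K)" by (simp add: measure_def)
  also have "\<dots> = measure (lebn n) B - measure (lebn n) K"
    by (rule measure_Diff[OF finB semialg_sets[OF Bs] semialg_sets[OF K(1)]]) (use R in \<open>simp add: B_def\<close>)
  finally have mL: "measure (lebn n) L = M - measure (lebn n) K" using mB by simp
  show ?thesis
  proof (cases "M \<le> c")
    case True
    have "ralg (c + - M)" using ralg_add_rat[OF c(1)] Mq by (simp only: Rats_minus_iff)
    then have "ralg (c - M)" by simp
    from add_lemma[OF n Ls Lc this] True obtain K' where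
      "K' \<in> semialg n" "compact K'" "measure (lebn n) K' = measure (lebn n) L + (c - M)" by auto
    then show ?thesis using mL by (intro exI[of _ K']) auto
  next
    case False
    have "ralg (- c + M)" using ralg_add_rat[OF ralg_uminus[OF c(1)] Mq] .
    then have r: "ralg (M - c)" by simp
    have "M - c < measure (lebn n) L" using mL c(2) by simp
    from sub_lemma[OF n Ls Lc r _ this] False obtain K' where
      "K' \<in> semialg n" "compact K'" "measure (lebn n) K' = measure (lebn n) L - (M - c)" by auto
    then show ?thesis using mL by (intro exI[of _ K']) auto
  qed
qed

lemma semialg_to_SA:
  assumes "K \<in> semialg k" "measure (lebn k) K > 0"
  shows "K \<in> SA k"
proof -
  have "emeasure (lebn k) K \<noteq> 0"
    using assms(2) by (auto simp: measure_def)
  then show ?thesis using semialg_pos_interior[OF assms(1)] assms(1) by (simp add: SA_def)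
qed

lemma key_add:
  assumes k: "0 < k" and K: "K \<in> semialg k" "compact K" and c: "ralg c"
    and pos: "measure (lebn k) K + c > 0"
  shows "\<exists>K'. K' \<in> SA k \<and> compact K' \<and> measure (lebn k) K + c = measure (lebn k) K'"
proof -
  have "\<exists>K'. K' \<in> semialg k \<and> compact K' \<and> measure (lebn k) K' = measure (lebn k) K + c"
  proof (cases "0 \<le> c")
    case True
    then show ?thesis using add_lemma[OF k K c] by blast
  next
    case False
    have "ralg (- c)" using c by (rule ralg_uminus)
    from sub_lemma[OF k K this] False pos show ?thesis by auto
  qed
  then obtain K' where "K' \<in> semialg k" "compact K'" "measure (lebn k) K' = measure (lebn k) K + c" by blast
  then show ?thesis using pos semialg_to_SA by (intro exI[of _ K']) auto
qed

lemma key_minus: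
  assumes k: "0 < k" and K: "K \<in> semialg k" "compact K" and c: "ralg c"
    and pos: "c - measure (lebn k) K > 0"
  shows "\<exists>K'. K' \<in> SA k \<and> compact K' \<and> c - measure (lebn k) K = measure (lebn k) K'"
proof -
  obtain K' where "K' \<in> semialg k" "compact K'" "measure (lebn k) K' = c - measure (lebn k) K"
    using cminus_lemma[OF k K c] pos by auto
  then show ?thesis using pos semialg_to_SA by (intro exI[of _ K']) auto
qed

lemma transfer:
  assumes k: "0 < k" and y: "ralg y" and q: "q \<noteq> 0" "q + y \<noteq> 0"
    and K: "K \<in> SA k" "compact K" "\<bar>q\<bar> = measure (lebn k) K"
  shows "\<exists>K'. K' \<in> SA k \<and> compact K' \<and> \<bar>q + y\<bar> = measure (lebn k) K'"
proof -
  have Ks: "K \<in> semialg k" using K(1) by (simp add: SA_def)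
  define v where "v = measure (lebn k) K"
  have ny: "ralg (- y)" using y by (rule ralg_uminus)
  consider "q > 0" "q + y > 0" | "q > 0" "q + y < 0" | "q < 0" "q + y > 0" | "q < 0" "q + y < 0"
    using q by linarith
  then show ?thesis
  proof cases
    case 1
    then have "\<bar>q + y\<bar> = v + y" "v + y > 0" using K(3) by (auto simp: v_def)
    then show ?thesis using key_add[OF k Ks K(2) y] by (auto simp: v_def)
  next
    case 2
    then have "\<bar>q + y\<bar> = - y - v" "- y - v > 0" using K(3) by (auto simp: v_def)
    then show ?thesis using key_minus[OF k Ks K(2) ny] by (auto simp: v_def)
  next
    case 3
    then have "\<bar>q + y\<bar> = y - v" "y - v > 0" using K(3) by (auto simp: v_def)
    then show ?thesis using key_minus[OF k Ks K(2) y] by (auto simp: v_def)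
  next
    case 4
    then have "\<bar>q + y\<bar> = v + - y" "v + - y > 0" using K(3) by (auto simp: v_def)
    then show ?thesis using key_add[OF k Ks K(2) ny] by (auto simp: v_def)
  qed
qed

theorem mainTheorem6:
  fixes x p :: real
  assumes "ralg x" and "x \<noteq> 0"
    and "p \<in> periods" and "\<not> ralg p"
  shows "period_deg (x + p) = period_deg p"
proof -
  have p0: "p \<noteq> 0" using assms(4) ralg_rat[of 0] by auto
  have xp0: "x + p \<noteq> 0"
  proof
    assume "x + p = 0"
    then have "p = - x" by simp
    then show False using assms(4) ralg_uminus[OF assms(1)] by simp
  qed
  have eq: "(\<lambda>k. k > 0 \<and> (\<exists>K. K \<in> SA k \<and> compact K \<and> \<bar>x + p\<bar> = measure (lebn k) K)) =
            (\<lambda>k. k > 0 \<and> (\<exists>K. K \<in> SA k \<and> compact K \<and> \<bar>p\<bar> = measure (lebn k) K))"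
  proof (intro ext iffI conjI)
    fix k assume h: "k > 0 \<and> (\<exists>K. K \<in> SA k \<and> compact K \<and> \<bar>x + p\<bar> = measure (lebn k) K)"
    then obtain K where "K \<in> SA k" "compact K" "\<bar>x + p\<bar> = measure (lebn k) K" by blast
    from transfer[OF _ ralg_uminus[OF assms(1)] xp0 _ this] h p0
    show "\<exists>K. K \<in> SA k \<and> compact K \<and> \<bar>p\<bar> = measure (lebn k) K" by simp
    show "k > 0" using h by simp
  next
    fix k assume h: "k > 0 \<and> (\<exists>K. K \<in> SA k \<and> compact K \<and> \<bar>p\<bar> = measure (lebn k) K)"
    then obtain K where "K \<in> SA k" "compact K" "\<bar>p\<bar> = measure (lebn k) K" by blast
    from transfer[OF _ assms(1) p0 _ this] h xp0
    show "\<exists>K. K \<in> SA k \<and> compact K \<and> \<bar>x + p\<bar> = measure (lebn k) K" by (simp add: add.commute)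
    show "k > 0" using h by simp
  qed
  show ?thesis
    unfolding period_deg_def using p0 xp0 eq by simp
qed


end
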